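(* Let $d\in T^{W_P}$, $q=\alpha_1(d)$, and $z\in Z_d$ with $z=u_1\dot w_Pd\bar u_2$, $u_1\in U_+\cap\dot w_PU_+\dot w_P^{-1}$, $\bar u_2\in U_-$, where $\bar u_2=y_1(a_1)\cdots y_{m-1}(a_{m-1})y_m(c)y_{m-1}(b_{m-1})\cdots y_1(b_1)$ with all $a_i,c,b_i\neq0$. Then $$\mathcal F_d(\pi_R(z))=a_1+\dots+a_{m-1}+c+b_{m-1}+\dots+b_1+q\,\frac{a_1+b_1}{a_1\cdots a_{m-1}\,c\,b_{m-1}\cdots b_1}.$$
   Context: Fix an integer $m\ge 2$. Let $V=\mathbb C^{2m}$ and let $J$ be the $2m\times 2m$ matrix with $J_{i,2m+1-i}=(-1)^i$ for $1\le i\le 2m$ and all other entries $0$. Let $G=\mathrm{PSp}(V,J)\cong\mathrm{PSp}_{2m}(\mathbb C)$, whose elements are represented by matrices. Let $E_{i,j}$ denote matrix units, $e_i=E_{i,i+1}+E_{2m-i,2m-i+1}$ for $1\le i\le m-1$, $e_m=E_{m,m+1}$, $f_i=e_i^{T}$, $x_i(a)=\exp(ae_i)$, $y_i(a)=\exp(af_i)$. Let $B_+=TU_+$ and $B_-=TU_-$ be the upper resp. lower triangular elements of $G$, with $U_\pm$ their unipotent radicals and $T$ the diagonal elements $(d_{ij})$ with $d_{ii}=d_{2m+1-i,2m+1-i}^{-1}$. The Weyl group $W$ is generated by $s_1,\dots,s_m$ with representatives $\dot s_i=y_i(-1)x_i(1)y_i(-1)$; for $w=s_{i_1}\cdots s_{i_k}$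 reduced, $\dot w=\dot s_{i_1}\cdots\dot s_{i_k}$. Let $W_P=\langle s_2,\dots,s_m\rangle$, $w_P$ its longest element, $w_0$ the longest element of $W$. Let $T^{W_P}$ be the $W_P$-fixed part of $T$, and $\alpha_1(d)=d_{11}/d_{22}$. For $d\in T^{W_P}$ let $Z_d=B_-\dot w_0\cap U_+d\dot w_PU_-$. The open Richardson variety is $\mathcal R=(B_+\dot w_PB_-\cap B_-\dot w_0B_-)/B_-\subset G/B_-$, and $\pi_R:Z_d\to\mathcal R$, $z\mapsto zB_-$, is an isomorphism. Each $z\in Z_d$ is written uniquely as $z=u_1\dot w_Pd\bar u_2$ with $u_1\in U_+\cap\dot w_PU_+\dot w_P^{-1}$ and $\bar u_2\in U_-$. For $u\in U_+$ put $e_i^*(u)=u_{i,i+1}$, and for $\bar u\in U_-$ put $f_i^*(\bar u)=\bar u_{i+1,i}$. The superpotential is $\mathcal F_d(\pi_R(z))=\sum_{i=1}^m e_i^*(u_1)+\sum_{i=1}^m f_i^*(\bar u_2)$. *)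

theory Defs
  imports Complex_Main "Jordan_Normal_Form.Matrix"
begin

(* All matrices are 2m x 2m complex matrices (Jordan_Normal_Form 'complex mat').
   Paper indices are 1-based; ent A i j is the paper's entry A_{i,j}. *)

definition ent :: "complex mat \<Rightarrow> nat \<Rightarrow> nat \<Rightarrow> complex" where
  "ent A i j = A $$ (i - 1, j - 1)"

definition Eunit :: "nat \<Rightarrow> nat \<Rightarrow> nat \<Rightarrow> complex mat" where
  "Eunit m i j = mat (2*m) (2*m) (\<lambda>(a,b). if a + 1 = i \<and> b + 1 = j then 1 else 0)"

definition Jmat :: "nat \<Rightarrow> complex mat" where
  "Jmat m = mat (2*m) (2*m) (\<lambda>(a,b). if a + 1 + (b + 1) = 2*m + 1 then (-1) ^ (a + 1) else 0)"

definition Sp :: "nat \<Rightarrow> complex mat set" where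
  "Sp m = {g \<in> carrier_mat (2*m) (2*m). transpose_mat g * Jmat m * g = Jmat m}"

(* PSp = Sp / {+1,-1}: two representatives define the same element of G iff they agree up to sign *)
definition peq :: "complex mat \<Rightarrow> complex mat \<Rightarrow> bool" where
  "peq A B \<longleftrightarrow> A = B \<or> A = - B"

definition lower_triangular :: "complex mat \<Rightarrow> bool" where
  "lower_triangular A \<longleftrightarrow> upper_triangular (transpose_mat A)"

definition Bplus :: "nat \<Rightarrow> complex mat set" where
  "Bplus m = {b \<in> Sp m. upper_triangular b}"
definition Bminus :: "nat \<Rightarrow> complex mat set" where
  "Bminus m = {b \<in> Sp m. lower_triangular b}"
definition Uplus :: "nat \<Rightarrow> complex mat set" where
  "Uplus m = {u \<in> Bplus m. \<forall>i\<in>{1..2*m}. ent u i i = 1}"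
definition Uminus :: "nat \<Rightarrow> complex mat set" where
  "Uminus m = {u \<in> Bminus m. \<forall>i\<in>{1..2*m}. ent u i i = 1}"

definition Torus :: "nat \<Rightarrow> complex mat set" where
  "Torus m = {d \<in> Sp m. diagonal_mat d \<and>
      (\<forall>i\<in>{1..2*m}. ent d i i = inverse (ent d (2*m+1-i) (2*m+1-i)))}"

definition e_gen :: "nat \<Rightarrow> nat \<Rightarrow> complex mat" where
  "e_gen m i = (if i = m then Eunit m m (m+1)
                else Eunit m i (i+1) + Eunit m (2*m-i) (2*m-i+1))"
definition f_gen :: "nat \<Rightarrow> nat \<Rightarrow> complex mat" where
  "f_gen m i = transpose_mat (e_gen m i)"

(* matrix exponential of a nilpotent n x n matrix: exp A = sum_{k=0}^{n} A^k / k!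
   (exact, since A^n = 0 for nilpotent A); all arguments used below are nilpotent *)
definition nilexp :: "complex mat \<Rightarrow> complex mat" where
  "nilexp A = foldr (\<lambda>k S. (1 / of_nat (fact k)) \<cdot>\<^sub>m (A ^\<^sub>m k) + S)
                    [0..<dim_row A + 1] (0\<^sub>m (dim_row A) (dim_row A))"

definition x_el :: "nat \<Rightarrow> nat \<Rightarrow> complex \<Rightarrow> complex mat" where
  "x_el m i a = nilexp (a \<cdot>\<^sub>m e_gen m i)"
definition y_el :: "nat \<Rightarrow> nat \<Rightarrow> complex \<Rightarrow> complex mat" where
  "y_el m i a = nilexp (a \<cdot>\<^sub>m f_gen m i)"

definition sdot :: "nat \<Rightarrow> nat \<Rightarrow> complex mat" where
  "sdot m i = y_el m i (-1) * x_el m i 1 * y_el m i (-1)"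

definition wdot :: "nat \<Rightarrow> nat list \<Rightarrow> complex mat" where
  "wdot m ws = foldr (\<lambda>i M. sdot m i * M) ws (1\<^sub>m (2*m))"

(* Reduced words: in type C_m the longest element is c^m for the Coxeter element
   c = s_1 s_2 ... s_m (length m^2); W_P = <s_2,...,s_m> is of type C_{m-1}, with
   longest element (s_2 ... s_m)^(m-1). *)
definition w0_word :: "nat \<Rightarrow> nat list" where
  "w0_word m = concat (replicate m [1..<m+1])"
definition wP_word :: "nat \<Rightarrow> nat list" where
  "wP_word m = concat (replicate (m - 1) [2..<m+1])"

definition w0dot :: "nat \<Rightarrow> complex mat" where "w0dot m = wdot m (w0_word m)"
definition wPdot :: "nat \<Rightarrow> complex mat" where "wPdot m = wdot m (wP_word m)"

(* T^{W_P}: torus elements fixed (in G = PSp) by the generators s_2,...,s_m of W_P *)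
definition TWP :: "nat \<Rightarrow> complex mat set" where
  "TWP m = {d \<in> Torus m. \<forall>i\<in>{2..m}. peq (sdot m i * d) (d * sdot m i)}"

definition alpha1 :: "complex mat \<Rightarrow> complex" where
  "alpha1 d = ent d 1 1 / ent d 2 2"

(* Z_d = B_- \<dot>w_0 \<inter> U_+ d \<dot>w_P U_-  (as a subset of G = PSp, via representatives) *)
definition Zd :: "nat \<Rightarrow> complex mat \<Rightarrow> complex mat set" where
  "Zd m d = {z \<in> Sp m. (\<exists>b\<in>Bminus m. peq z (b * w0dot m)) \<and>
                       (\<exists>u\<in>Uplus m. \<exists>v\<in>Uminus m. peq z (u * d * wPdot m * v))}"

(* U_+ \<inter> \<dot>w_P U_+ \<dot>w_P^{-1} (in G) *)
definition Uplus_wP :: "nat \<Rightarrow> complex mat set" where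
  "Uplus_wP m = {u \<in> Uplus m. \<exists>u'\<in>Uplus m. peq (u * wPdot m) (wPdot m * u')}"

definition ubar_form :: "nat \<Rightarrow> (nat \<Rightarrow> complex) \<Rightarrow> complex \<Rightarrow> (nat \<Rightarrow> complex) \<Rightarrow> complex mat" where
  "ubar_form m a c b =
     foldr (\<lambda>i M. y_el m i (a i) * M) [1..<m]
       (y_el m m c * foldr (\<lambda>i M. M * y_el m i (b i)) [1..<m] (1\<^sub>m (2*m)))"

(* superpotential F_d(\<pi>_R(z)) = sum_i e_i^*(u_1) + sum_i f_i^*(ubar_2),
   where z = u_1 \<dot>w_P d ubar_2 is the unique decomposition of z \<in> Z_d *)
definition superpot :: "nat \<Rightarrow> complex mat \<Rightarrow> complex mat \<Rightarrow> complex" where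
  "superpot m u1 u2 = (\<Sum>i=1..m. ent u1 i (i+1)) + (\<Sum>i=1..m. ent u2 (i+1) i)"

end

theory Submission
  imports Defs
begin


declare upt_Suc[simp del]

lemma mult_entry:
  assumes "A \<in> carrier_mat n n" "B \<in> carrier_mat n n" "j < n" "c < n"
  shows "(A*B)$$(j,c) = (\<Sum>k<n. A$$(j,k) * B$$(k,c))"
  using assms by (simp add: scalar_prod_def lessThan_atLeast0)

lemma sum_delta_mult: "p < (n::nat) \<Longrightarrow> (\<Sum>k<n. (if k = p then a else 0) * (f k::complex)) = a * f p"
proof -
  assume "p<n"
  have "(\<Sum>k<n. (if k = p then a else 0) * f k) = (\<Sum>k<n. if k = p then a * f p else 0)"
    by (rule sum.cong) auto
  also have "\<dots> = a * f p" using \<open>p<n\<close> by (subst sum.delta) auto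
  finally show ?thesis .
qed

lemma row_two:
  fixes A B :: "complex mat"
  assumes "A \<in> carrier_mat n n" "B \<in> carrier_mat n n" "j < n" "c < n"
    and "\<forall>k<n. A$$(j,k) = (if k = p then \<alpha> else 0) + (if k = q \<and> C then \<beta> else 0)"
    and "p < n" and "C \<Longrightarrow> q < n"
  shows "(A*B)$$(j,c) = \<alpha> * B$$(p,c) + (if C then \<beta> * B$$(q,c) else 0)"
proof -
  have "(A*B)$$(j,c) = (\<Sum>k<n. (if k = p then \<alpha> else 0) * B$$(k,c) + (if k = q \<and> C then \<beta> else 0) * B$$(k,c))"
    unfolding mult_entry[OF assms(1-4)] by (rule sum.cong) (use assms in \<open>auto simp: distrib_right\<close>)
  also have "\<dots> = \<alpha> * B$$(p,c) + (\<Sum>k<n. (if k = q \<and> C then \<beta> else 0) * B$$(k,c))"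
    using assms by (simp add: sum.distrib sum_delta_mult)
  also have "(\<Sum>k<n. (if k = q \<and> C then \<beta> else 0) * B$$(k,c)) = (if C then \<beta> * B$$(q,c) else 0)"
  proof (cases C)
    case True then show ?thesis using assms sum_delta_mult[of q n \<beta> "\<lambda>k. B$$(k,c)"] by simp
  next
    case False then show ?thesis by simp
  qed
  finally show ?thesis .
qed

definition Pgood :: "nat set \<Rightarrow> nat \<Rightarrow> bool" where
  "Pgood P n \<longleftrightarrow> (\<forall>p\<in>P. p + 1 < n \<and> p + 1 \<notin> P)"

definition Xm :: "nat set \<Rightarrow> nat \<Rightarrow> complex mat" where
  "Xm P n = mat n n (\<lambda>(r,c). (if r = c then 1 else 0) + (if r \<in> P \<and> c = r + 1 then 1 else 0))"
definition Ym :: "nat set \<Rightarrow> nat \<Rightarrow> complex mat" where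
  "Ym P n = mat n n (\<lambda>(r,c). (if r = c then 1 else 0) - (if c \<in> P \<and> r = c + 1 then 1 else 0))"

definition actP :: "nat set \<Rightarrow> nat \<Rightarrow> nat" where
  "actP P j = (if j \<in> P then j+1 else if 1 \<le> j \<and> j - 1 \<in> P then j - 1 else j)"
definition sgnP :: "nat set \<Rightarrow> nat \<Rightarrow> complex" where
  "sgnP P j = (if j \<notin> P \<and> 1 \<le> j \<and> j - 1 \<in> P then -1 else 1)"

lemma Xm_c[simp]: "Xm P n \<in> carrier_mat n n" and Ym_c[simp]: "Ym P n \<in> carrier_mat n n"
  by (auto simp: Xm_def Ym_def)

lemma XYm_dims[simp]: "dim_row (Xm P n) = n" "dim_col (Xm P n) = n" "dim_row (Ym P n) = n" "dim_col (Ym P n) = n"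
  by (simp_all add: Xm_def Ym_def)

lemma Ym_entry[simp]: "r < n \<Longrightarrow> c < n \<Longrightarrow> Ym P n $$ (r,c) = (if r = c then 1 else 0) - (if c \<in> P \<and> r = c + 1 then 1 else 0)"
  by (simp add: Ym_def)
lemma Xm_entry[simp]: "r < n \<Longrightarrow> c < n \<Longrightarrow> Xm P n $$ (r,c) = (if r = c then 1 else 0) + (if r \<in> P \<and> c = r + 1 then 1 else 0)"
  by (simp add: Xm_def)

lemma YX_entry:
  assumes "Pgood P n" "j < n" "c < n"
  shows "(Ym P n * Xm P n)$$(j,c) = (if j \<in> P then (if c = j then 1 else 0) + (if c = j+1 then 1 else 0)
      else if 1 \<le> j \<and> j - 1 \<in> P then (if c = j - 1 then -1 else 0) else (if c = j then 1 else 0))"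
proof -
  have rowY: "\<forall>k<n. Ym P n $$(j,k) = (if k = j then 1 else 0) + (if k = j - 1 \<and> (1 \<le> j \<and> j - 1 \<in> P) then -1 else 0)"
    using assms by (auto simp: Ym_def)
  have "(Ym P n * Xm P n)$$(j,c) = 1 * Xm P n $$(j,c) + (if (1 \<le> j \<and> j - 1 \<in> P) then -1 * Xm P n $$(j-1,c) else 0)"
    by (rule row_two[OF Ym_c Xm_c assms(2,3) rowY]) (use assms in auto)
  then show ?thesis using assms unfolding Pgood_def by auto
qed

lemma YXY_entry:
  assumes "Pgood P n" "j < n" "c < n"
  shows "(Ym P n * Xm P n * Ym P n)$$(j,c) = (if c = actP P j then sgnP P j else 0)"
proof -
  have YXc: "Ym P n * Xm P n \<in> carrier_mat n n" by (rule mult_carrier_mat[OF Ym_c Xm_c])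
  consider (a) "j \<in> P" | (b) "j \<notin> P" "1 \<le> j \<and> j - 1 \<in> P" | (c) "j \<notin> P" "\<not> (1 \<le> j \<and> j - 1 \<in> P)" by blast
  then show ?thesis
  proof cases
    case a
    have r: "\<forall>k<n. (Ym P n * Xm P n)$$(j,k) = (if k = j then 1 else 0) + (if k = j+1 \<and> True then 1 else 0)"
      using YX_entry[OF assms(1,2)] a by auto
    have "(Ym P n * Xm P n * Ym P n)$$(j,c) = 1 * Ym P n $$(j,c) + (if True then 1 * Ym P n $$(j+1,c) else 0)"
      by (rule row_two[OF YXc Ym_c assms(2,3) r]) (use assms a in \<open>auto simp: Pgood_def\<close>)
    also have "\<dots> = (if c = actP P j then sgnP P j else 0)" using assms a unfolding Pgood_def actP_def sgnP_def
      by auto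
    finally show ?thesis .
  next
    case b
    have r: "\<forall>k<n. (Ym P n * Xm P n)$$(j,k) = (if k = j - 1 then -1 else 0) + (if k = j \<and> False then 1 else 0)"
      using YX_entry[OF assms(1,2)] b by auto
    have "(Ym P n * Xm P n * Ym P n)$$(j,c) = -1 * Ym P n $$(j-1,c) + (if False then 1 * Ym P n $$(j,c) else 0)"
      by (rule row_two[OF YXc Ym_c assms(2,3) r]) (use assms b in auto)
    also have "\<dots> = (if c = actP P j then sgnP P j else 0)" using assms b unfolding Pgood_def actP_def sgnP_def
      by auto
    finally show ?thesis .
  next
    case c
    have r: "\<forall>k<n. (Ym P n * Xm P n)$$(j,k) = (if k = j then 1 else 0) + (if k = j \<and> False then 1 else 0)"
      using YX_entry[OF assms(1,2)] c by auto
    have "(Ym P n * Xm P n * Ym P n)$$(j,c) = 1 * Ym P n $$(j,c) + (if False then 1 * Ym P n $$(j,c) else 0)"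
      by (rule row_two[OF YXc Ym_c assms(2,3) r]) (use assms c in auto)
    also have "\<dots> = (if c = actP P j then sgnP P j else 0)" using assms c unfolding Pgood_def actP_def sgnP_def
      by auto
    finally show ?thesis .
  qed
qed

definition PS :: "nat \<Rightarrow> nat \<Rightarrow> nat set" where
  "PS m i = (if i = m then {m - 1} else {i - 1, 2*m - 1 - i})"

definition Em :: "nat set \<Rightarrow> nat \<Rightarrow> complex mat" where
  "Em P n = mat n n (\<lambda>(r,c). if r \<in> P \<and> c = r + 1 then 1 else 0)"

lemma Em_c[simp]: "Em P n \<in> carrier_mat n n" by (simp add: Em_def)
lemma Em_entry[simp]: "r < n \<Longrightarrow> c < n \<Longrightarrow> Em P n $$ (r,c) = (if r \<in> P \<and> c = r + 1 then 1 else 0)"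
  by (simp add: Em_def)

lemma Em_dims[simp]: "dim_row (Em P n) = n" "dim_col (Em P n) = n" by (simp_all add: Em_def)

lemma PS_good: assumes "2 \<le> m" "1 \<le> i" "i \<le> m" shows "Pgood (PS m i) (2*m)"
proof (cases "i = m")
  case True thus ?thesis using assms by (simp add: Pgood_def PS_def)
next
  case False
  have h: "i \<noteq> 2*m - 1 - i" "2*m - 1 - i + 1 \<noteq> i - 1" using assms False by presburger+
  show ?thesis using assms False h by (auto simp: Pgood_def PS_def)
qed

lemma e_gen_Em: assumes "2 \<le> m" "1 \<le> i" "i \<le> m" shows "e_gen m i = Em (PS m i) (2*m)"
proof (rule eq_matI)
  show "dim_row (e_gen m i) = dim_row (Em (PS m i) (2 * m))"
    by (simp add: e_gen_def Eunit_def)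
  show "dim_col (e_gen m i) = dim_col (Em (PS m i) (2 * m))"
    by (simp add: e_gen_def Eunit_def)
  fix r c assume "r < dim_row (Em (PS m i) (2 * m))" "c < dim_col (Em (PS m i) (2 * m))"
  then have rc: "r < 2*m" "c < 2*m" by auto
  show "e_gen m i $$ (r, c) = Em (PS m i) (2 * m) $$ (r, c)"
  proof (cases "i = m")
    case True
    have "(r + 1 = m \<and> c + 1 = m + 1) \<longleftrightarrow> (r = m - 1 \<and> c = r + 1)" using assms by arith
    then show ?thesis using True rc assms unfolding e_gen_def Eunit_def PS_def by simp
  next
    case False
    have h1: "(r + 1 = i \<and> c + 1 = i + 1) \<longleftrightarrow> (r = i - 1 \<and> c = r + 1)" using assms by arith
    have h2: "(r + 1 = 2*m - i \<and> c + 1 = 2*m - i + 1) \<longleftrightarrow> (r = 2*m - 1 - i \<and> c = r + 1)" using assms by arith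
    have h3: "\<not> (r = i - 1 \<and> r = 2*m - 1 - i)" using assms False by presburger
    have "e_gen m i $$ (r, c) = (if r + 1 = i \<and> c + 1 = i + 1 then 1 else 0) + (if r + 1 = 2*m - i \<and> c + 1 = 2*m - i + 1 then 1 else 0)"
      using False rc unfolding e_gen_def Eunit_def by simp
    also have "\<dots> = Em (PS m i) (2 * m) $$ (r, c)"
      unfolding h1 h2 using h3 rc False by (auto simp: PS_def)
    finally show ?thesis .
  qed
qed

lemma Em_sq: assumes "Pgood P n" shows "Em P n * Em P n = 0\<^sub>m n n"
proof (rule eq_matI)
  fix r c assume "r < dim_row (0\<^sub>m n n)" "c < dim_col (0\<^sub>m n n)"
  then have rc: "r < n" "c < n" by auto
  show "(Em P n * Em P n) $$ (r,c) = 0\<^sub>m n n $$ (r,c)"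
  proof (cases "r \<in> P")
    case True
    have row: "\<forall>k<n. Em P n $$ (r,k) = (if k = r+1 then 1 else 0) + (if k = 0 \<and> False then 0 else 0)"
      using True rc by auto
    have "(Em P n * Em P n) $$ (r,c) = 1 * Em P n $$ (r+1,c) + (if False then 0 * Em P n $$ (0,c) else 0)"
      by (rule row_two[OF Em_c Em_c rc row]) (use assms True in \<open>auto simp: Pgood_def\<close>)
    then show ?thesis using assms True rc by (auto simp: Pgood_def)
  next
    case False
    have row: "\<forall>k<n. Em P n $$ (r,k) = (if k = 0 then 0 else 0) + (if k = 0 \<and> False then 0 else 0)"
      using False rc by auto
    have "(Em P n * Em P n) $$ (r,c) = 0 * Em P n $$ (0,c) + (if False then 0 * Em P n $$ (0,c) else 0)"
      by (rule row_two[OF Em_c Em_c rc row]) (use rc in auto)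
    then show ?thesis using rc by auto
  qed
qed auto

lemma nilexp_sq0:
  fixes A :: "complex mat"
  assumes A: "A \<in> carrier_mat n n" and sq: "A * A = 0\<^sub>m n n" and n: "1 \<le> n"
  shows "nilexp A = 1\<^sub>m n + A"
proof -
  have pow: "A ^\<^sub>m k = 0\<^sub>m n n" if "2 \<le> k" for k
    using that
  proof (induction k)
    case 0 then show ?case by simp
  next
    case (Suc k)
    show ?case
    proof (cases "k = 1")
      case True then show ?thesis using A sq by simp
    next
      case False
      then have "A ^\<^sub>m k = 0\<^sub>m n n" using Suc by simp
      then show ?thesis using A by simp
    qed
  qed
  define f where "f = (\<lambda>k S. (1 / of_nat (fact k)) \<cdot>\<^sub>m (A ^\<^sub>m k) + (S::complex mat))"
  have z: "foldr f xs (0\<^sub>m n n) = 0\<^sub>m n n" if "\<forall>k\<in>set xs. 2 \<le> k" for xs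
    using that by (induction xs) (auto simp: f_def pow)
  have l: "[0..<n+1] = [0,1] @ [2..<n+1]" using n
    by (simp add: upt_conv_Cons numeral_2_eq_2)
  have dr: "dim_row A = n" using A by simp
  have z2: "foldr f [2..<n+1] (0\<^sub>m n n) = 0\<^sub>m n n" by (rule z) auto
  have "nilexp A = foldr f [0..<n+1] (0\<^sub>m n n)" unfolding nilexp_def f_def dr ..
  also have "foldr f [0..<n+1] (0\<^sub>m n n) = f 0 (f 1 (0\<^sub>m n n))" by (simp only: l foldr_append z2) simp
  also have "\<dots> = 1\<^sub>m n + A" using A unfolding f_def by (intro eq_matI) auto
  finally show ?thesis .
qed

lemma sq_smult:
  fixes A :: "complex mat"
  assumes "A \<in> carrier_mat n n" "A * A = 0\<^sub>m n n"
  shows "(t \<cdot>\<^sub>m A) * (t \<cdot>\<^sub>m A) = 0\<^sub>m n n"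
  using assms by (simp add: mult_smult_assoc_mat[of _ n n] mult_smult_distrib[of _ n n])

lemma good_m: assumes "2 \<le> m" "1 \<le> i" "i \<le> m" shows
  "e_gen m i \<in> carrier_mat (2*m) (2*m)" "e_gen m i * e_gen m i = 0\<^sub>m (2*m) (2*m)"
  "f_gen m i \<in> carrier_mat (2*m) (2*m)" "f_gen m i * f_gen m i = 0\<^sub>m (2*m) (2*m)"
proof -
  show c: "e_gen m i \<in> carrier_mat (2*m) (2*m)" using e_gen_Em[OF assms] by simp
  show s: "e_gen m i * e_gen m i = 0\<^sub>m (2*m) (2*m)" using e_gen_Em[OF assms] Em_sq[OF PS_good[OF assms]] by simp
  show "f_gen m i \<in> carrier_mat (2*m) (2*m)" using c by (simp add: f_gen_def)
  have "f_gen m i * f_gen m i = transpose_mat (e_gen m i * e_gen m i)"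
    unfolding f_gen_def by (rule transpose_mult[OF c c, symmetric])
  also have "\<dots> = 0\<^sub>m (2*m) (2*m)" unfolding s by (intro eq_matI) auto
  finally show "f_gen m i * f_gen m i = 0\<^sub>m (2*m) (2*m)" .
qed

lemma x_el_eq: assumes "2 \<le> m" "1 \<le> i" "i \<le> m"
  shows "x_el m i a = 1\<^sub>m (2*m) + a \<cdot>\<^sub>m e_gen m i"
  unfolding x_el_def by (rule nilexp_sq0) (use good_m[OF assms] sq_smult assms in auto)

lemma y_el_eq: assumes "2 \<le> m" "1 \<le> i" "i \<le> m"
  shows "y_el m i a = 1\<^sub>m (2*m) + a \<cdot>\<^sub>m f_gen m i"
  unfolding y_el_def by (rule nilexp_sq0) (use good_m[OF assms] sq_smult assms in auto)

lemma x_el_c: assumes "2 \<le> m" "1 \<le> i" "i \<le> m" shows "x_el m i a \<in> carrier_mat (2*m) (2*m)"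
  using x_el_eq[OF assms] good_m[OF assms] by simp
lemma y_el_c: assumes "2 \<le> m" "1 \<le> i" "i \<le> m" shows "y_el m i a \<in> carrier_mat (2*m) (2*m)"
  using y_el_eq[OF assms] good_m[OF assms] by simp

lemma y_el_entry: assumes "2 \<le> m" "1 \<le> i" "i \<le> m" "r < 2*m" "c < 2*m"
  shows "y_el m i a $$ (r,c) = (if r = c then 1 else 0) + a * (if c \<in> PS m i \<and> r = c + 1 then 1 else 0)"
  using assms(4,5) good_m[OF assms(1-3)] unfolding y_el_eq[OF assms(1-3)] f_gen_def e_gen_Em[OF assms(1-3)]
  by simp

lemma x1_eq: assumes "2 \<le> m" "1 \<le> i" "i \<le> m" shows "x_el m i 1 = Xm (PS m i) (2*m)"
  by (rule eq_matI) (use x_el_c[OF assms] good_m[OF assms] in \<open>auto simp: x_el_eq[OF assms] e_gen_Em[OF assms]\<close>)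

lemma ym1_eq: assumes "2 \<le> m" "1 \<le> i" "i \<le> m" shows "y_el m i (-1) = Ym (PS m i) (2*m)"
  by (rule eq_matI) (use y_el_c[OF assms] in \<open>auto simp: y_el_entry[OF assms]\<close>)

lemma sdot_eq: assumes "2 \<le> m" "1 \<le> i" "i \<le> m"
  shows "sdot m i = Ym (PS m i) (2*m) * Xm (PS m i) (2*m) * Ym (PS m i) (2*m)"
  unfolding sdot_def x1_eq[OF assms] ym1_eq[OF assms] ..

lemma sdot_c: assumes "2 \<le> m" "1 \<le> i" "i \<le> m" shows "sdot m i \<in> carrier_mat (2*m) (2*m)"
  unfolding sdot_eq[OF assms] by (intro mult_carrier_mat) auto

lemma sdot_entry: assumes "2 \<le> m" "1 \<le> i" "i \<le> m" "j < 2*m" "c < 2*m"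
  shows "sdot m i $$ (j,c) = (if c = actP (PS m i) j then sgnP (PS m i) j else 0)"
  unfolding sdot_eq[OF assms(1-3)] by (rule YXY_entry[OF PS_good[OF assms(1-3)] assms(4,5)])

lemma actP_lt: "Pgood P n \<Longrightarrow> j < n \<Longrightarrow> actP P j < n"
  unfolding Pgood_def actP_def by auto

definition stepA :: "nat \<Rightarrow> nat \<Rightarrow> nat \<times> complex \<Rightarrow> nat \<times> complex" where
  "stepA m i x = (actP (PS m i) (fst x), snd x * sgnP (PS m i) (fst x))"

definition wA :: "nat \<Rightarrow> nat list \<Rightarrow> nat \<times> complex \<Rightarrow> nat \<times> complex" where
  "wA m ws x = fold (stepA m) ws x"

lemma wA_Nil[simp]: "wA m [] x = x" by (simp add: wA_def)
lemma wA_Cons[simp]: "wA m (i#ws) x = wA m ws (stepA m i x)" by (simp add: wA_def)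
lemma wA_append: "wA m (xs @ ys) x = wA m ys (wA m xs x)" by (simp add: wA_def)

lemma wA_scale: "wA m ws (j, s) = (fst (wA m ws (j,1)), s * snd (wA m ws (j,1)))"
proof (induction ws arbitrary: j s)
  case Nil then show ?case by simp
next
  case (Cons i ws)
  have "wA m (i#ws) (j,s) = wA m ws (actP (PS m i) j, s * sgnP (PS m i) j)" by (simp add: stepA_def)
  also have "\<dots> = (fst (wA m ws (actP (PS m i) j,1)), s * sgnP (PS m i) j * snd (wA m ws (actP (PS m i) j,1)))"
    by (rule Cons)
  also have "wA m (i#ws) (j,1) = (fst (wA m ws (actP (PS m i) j,1)), sgnP (PS m i) j * snd (wA m ws (actP (PS m i) j,1)))"
    using Cons[of "actP (PS m i) j" "sgnP (PS m i) j"] by (simp add: stepA_def)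
  ultimately show ?case by simp
qed

lemma wA_lt: assumes "2 \<le> m" "\<forall>i\<in>set ws. 1 \<le> i \<and> i \<le> m" "j < 2*m"
  shows "fst (wA m ws (j,s)) < 2*m"
  using assms(2,3)
proof (induction ws arbitrary: j s)
  case Nil then show ?case by simp
next
  case (Cons i ws)
  then have "actP (PS m i) j < 2*m" using actP_lt PS_good assms(1) by auto
  then show ?case using Cons by (simp add: stepA_def)
qed

lemma wdot_Cons: "wdot m (i#ws) = sdot m i * wdot m ws" by (simp add: wdot_def)

lemma wdot_c: assumes "2 \<le> m" "\<forall>i\<in>set ws. 1 \<le> i \<and> i \<le> m"
  shows "wdot m ws \<in> carrier_mat (2*m) (2*m)"
  using assms(2)
proof (induction ws)
  case Nil then show ?case by (simp add: wdot_def)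
next
  case (Cons i ws) then show ?case using sdot_c[OF assms(1)] by (auto simp: wdot_Cons intro!: mult_carrier_mat)
qed

lemma wdot_entry: assumes "2 \<le> m" "\<forall>i\<in>set ws. 1 \<le> i \<and> i \<le> m" "j < 2*m" "c < 2*m"
  shows "wdot m ws $$ (j,c) = (if c = fst (wA m ws (j,1)) then snd (wA m ws (j,1)) else 0)"
  using assms(2,3)
proof (induction ws arbitrary: j)
  case Nil then show ?case using assms(4) by (simp add: wdot_def)
next
  case (Cons i ws)
  let ?P = "PS m i"
  have i: "1 \<le> i" "i \<le> m" using Cons by auto
  have p: "actP ?P j < 2*m" using actP_lt PS_good[OF assms(1) i] Cons by auto
  have row: "\<forall>k<2*m. sdot m i $$ (j,k) = (if k = actP ?P j then sgnP ?P j else 0) + (if k = 0 \<and> False then 0 else 0)"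
    using sdot_entry[OF assms(1) i Cons(3)] by auto
  have "wdot m (i#ws) $$ (j,c) = sgnP ?P j * wdot m ws $$ (actP ?P j, c) + (if False then 0 * wdot m ws $$ (0,c) else 0)"
    unfolding wdot_Cons
    by (rule row_two[OF sdot_c[OF assms(1) i] wdot_c[OF assms(1)] Cons(3) assms(4) row p])
      (use Cons in auto)
  also have "\<dots> = sgnP ?P j * (if c = fst (wA m ws (actP ?P j,1)) then snd (wA m ws (actP ?P j,1)) else 0)"
    using Cons p by simp
  also have "\<dots> = (if c = fst (wA m (i#ws) (j,1)) then snd (wA m (i#ws) (j,1)) else 0)"
    using wA_scale[of m ws "actP ?P j" "sgnP ?P j"] by (simp add: stepA_def)
  finally show ?case .
qed

lemma wA_fix: "(\<forall>i\<in>set ws. j \<notin> PS m i \<and> \<not>(1 \<le> j \<and> j - 1 \<in> PS m i)) \<Longrightarrow> wA m ws (j,s) = (j,s)"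
  by (induction ws) (auto simp: stepA_def actP_def sgnP_def)

lemma upt_Cons': "a \<le> m \<Longrightarrow> [a..<m+1] = a # [a+1..<m+1]"
  by (simp add: upt_conv_Cons)

lemma upt_split: "i \<le> j \<Longrightarrow> j \<le> k \<Longrightarrow> [i..<k] = [i..<j] @ [j..<k]"
  using upt_add_eq_append[of i j "k-j"] by simp

lemma upt_single[simp]: "[m..<Suc m] = [m]" by (simp add: upt_conv_Cons)

lemma R1: assumes "2 \<le> m" "1 \<le> a" "a \<le> m" shows "wA m [a..<m+1] (a - 1, s) = (m, s)"
  using assms(3,2)
proof (induction a rule: inc_induct)
  case base
  have "stepA m m (m - 1, s) = (m, s)" using assms(1) by (simp add: stepA_def actP_def sgnP_def PS_def)
  then show ?case by simp
next
  case (step a)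
  have "stepA m a (a - 1, s) = (a, s)" using step assms(1) by (auto simp: stepA_def actP_def sgnP_def PS_def)
  then show ?case using step upt_Cons'[of a m] by simp
qed

lemma R2: assumes "2 \<le> m" "1 \<le> a" "a \<le> j" "j \<le> m - 1" shows "wA m [a..<m+1] (j, s) = (j - 1, - s)"
proof -
  have sp: "[a..<m+1] = [a..<j] @ j # [j+1..<m+1]" using assms
    upt_split[of a j "m+1"] upt_Cons'[of j m] by simp
  have f1: "wA m [a..<j] (j,s) = (j,s)"
  proof (rule wA_fix, intro ballI)
    fix i assume "i \<in> set [a..<j]"
    then have i: "a \<le> i" "i < j" by auto
    have "i \<noteq> m" using i assms by auto
    moreover have "j \<noteq> 2*m - 1 - i" "j - 1 \<noteq> 2*m - 1 - i" using i assms by auto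
    ultimately show "j \<notin> PS m i \<and> \<not>(1 \<le> j \<and> j - 1 \<in> PS m i)" using i assms by (auto simp: PS_def)
  qed
  have jm: "j \<noteq> m" "j \<noteq> 2*m - 1 - j" using assms by presburger+
  have f2: "stepA m j (j,s) = (j - 1, -s)" using assms jm by (auto simp: stepA_def actP_def sgnP_def PS_def)
  have f3: "wA m [j+1..<m+1] (j-1,-s) = (j-1,-s)"
  proof (rule wA_fix, intro ballI)
    fix i assume "i \<in> set [j+1..<m+1]"
    then have i: "j < i" "i \<le> m" by auto
    show "j - 1 \<notin> PS m i \<and> \<not>(1 \<le> j - 1 \<and> j - 1 - 1 \<in> PS m i)"
      using i assms by (auto simp: PS_def)
  qed
  show ?thesis unfolding sp wA_append using f1 f2 f3 by simp
qed

lemma R3: assumes "2 \<le> m" "m \<le> j" "j \<le> 2*m - 3" shows "wA m [2..<m+1] (j, s) = (j + 1, s)"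
proof -
  define i0 where "i0 = 2*m - 1 - j"
  have i0: "2 \<le> i0" "i0 \<le> m - 1" using assms by (auto simp: i0_def)
  have sp: "[2..<m+1] = [2..<i0] @ i0 # [i0+1..<m+1]" using i0
    upt_split[of 2 i0 "m+1"] upt_Cons'[of i0 m] by simp
  have f1: "wA m [2..<i0] (j,s) = (j,s)"
  proof (rule wA_fix, intro ballI)
    fix i assume "i \<in> set [2..<i0]"
    then have i: "2 \<le> i" "i < i0" by auto
    show "j \<notin> PS m i \<and> \<not>(1 \<le> j \<and> j - 1 \<in> PS m i)" using i i0 assms by (auto simp: PS_def i0_def)
  qed
  have f2: "stepA m i0 (j,s) = (j+1, s)" using i0 assms by (auto simp: stepA_def actP_def sgnP_def PS_def i0_def)
  have f3: "wA m [i0+1..<m+1] (j+1,s) = (j+1,s)"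
  proof (rule wA_fix, intro ballI)
    fix i assume "i \<in> set [i0+1..<m+1]"
    then have i: "i0 < i" "i \<le> m" by auto
    show "j + 1 \<notin> PS m i \<and> \<not>(1 \<le> j + 1 \<and> j + 1 - 1 \<in> PS m i)"
      using i i0 assms by (auto simp: PS_def i0_def)
  qed
  show ?thesis unfolding sp wA_append using f1 f2 f3 by simp
qed

lemma R4: assumes "2 \<le> m" "1 \<le> a" "a \<le> m" shows "wA m [a..<m+1] (2*m - a, s) = (m - 1, (-1)^(m+1-a) * s)"
  using assms(3,2) 
proof (induction a arbitrary: s rule: inc_induct)
  case base
  have "stepA m m (2*m - m, s) = (m - 1, -s)" using assms(1) by (simp add: stepA_def actP_def sgnP_def PS_def)
  then show ?case by simp
next
  case (step a)
  have h: "2*m - a \<noteq> a - 1" "2*m - a \<noteq> 2*m - 1 - a" using step assms by presburger+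
  have "stepA m a (2*m - a, s) = (2*m - Suc a, -s)" using step assms h
    by (auto simp: stepA_def actP_def sgnP_def PS_def)
  moreover have "(-1::complex)^(m+1-a) = - ((-1)^(m + 1 - Suc a))"
  proof -
    have "m+1-a = Suc (m + 1 - Suc a)" using step by simp
    then show ?thesis by simp
  qed
  ultimately show ?case using step upt_Cons'[of a m] by simp
qed

lemma wA_rep: "wA m (concat (replicate k L)) x = (wA m L ^^ k) x"
  by (induction k arbitrary: x) (simp_all add: wA_append funpow_Suc_right del: funpow.simps)

lemma iterR2: assumes "2 \<le> m" "1 \<le> a" "k + a \<le> j + 1" "j \<le> m - 1"
  shows "(wA m [a..<m+1] ^^ k) (j,s) = (j - k, (-1)^k * s)"
  using assms(3)
proof (induction k)
  case 0 then show ?case by simp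
next
  case (Suc k)
  then have "(wA m [a..<m+1] ^^ k) (j,s) = (j - k, (-1)^k * s)" by simp
  moreover have "wA m [a..<m+1] (j - k, (-1)^k * s) = (j - k - 1, - ((-1)^k * s))"
    by (rule R2) (use assms Suc in auto)
  ultimately show ?case by simp
qed

lemma iterR3: assumes "2 \<le> m" "k \<le> m - 2"
  shows "(wA m [2..<m+1] ^^ k) (m,s) = (m + k, s)"
  using assms(2)
proof (induction k)
  case 0 then show ?case by simp
next
  case (Suc k)
  then have "(wA m [2..<m+1] ^^ k) (m,s) = (m + k, s)" by simp
  moreover have "wA m [2..<m+1] (m + k, s) = (m + k + 1, s)"
    by (rule R3) (use assms Suc in auto)
  ultimately show ?case by simp
qed

lemma WP1: assumes "2 \<le> m" shows "wA m (wP_word m) (2*m - 1, s) = (2*m - 1, s)"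
proof -
  have f: "wA m [2..<m+1] (2*m - 1, s') = (2*m - 1, s')" for s'
  proof (rule wA_fix, intro ballI)
    fix i assume "i \<in> set [2..<m+1]"
    then have i: "2 \<le> i" "i \<le> m" by auto
    show "2*m - 1 \<notin> PS m i \<and> \<not>(1 \<le> 2*m - 1 \<and> 2*m - 1 - 1 \<in> PS m i)"
      using i assms by (auto simp: PS_def)
  qed
  have "(wA m [2..<m+1] ^^ k) (2*m - 1, s) = (2*m - 1, s)" for k
  proof (induction k)
    case (Suc k)
    have "(wA m [2..<m+1] ^^ Suc k) (2*m - 1, s) = wA m [2..<m+1] ((wA m [2..<m+1] ^^ k) (2*m - 1, s))"
      by simp
    also have "\<dots> = (2*m - 1, s)" unfolding Suc f ..
    finally show ?case .
  qed simp
  then show ?thesis unfolding wP_word_def wA_rep .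
qed

lemma WP2: assumes "2 \<le> m" shows "wA m (wP_word m) (2*m - 2, 1) = (1, -1)"
proof -
  have e: "m - 1 = Suc (m - 2)" using assms by simp
  have r4: "wA m [2..<m+1] (2*m - 2, 1) = (m - 1, (-1)^(m - 1))"
    using R4[OF assms, of 2 1] assms by simp
  have "wA m (wP_word m) (2*m - 2, 1) = (wA m [2..<m+1] ^^ (m - 2)) (wA m [2..<m+1] (2*m - 2, 1))"
    unfolding wP_word_def wA_rep e funpow_Suc_right by simp
  also have "\<dots> = (m - 1 - (m - 2), (-1)^(m-2) * (-1)^(m-1))"
    unfolding r4 by (rule iterR2) (use assms in auto)
  also have "(-1::complex)^(m-2) * (-1)^(m-1) = (-1)^(2*m - 3)"
    using assms by (simp add: power_add[symmetric])
  also have "(-1::complex)^(2*m - 3) = -1"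
  proof -
    have "2*m - 3 = Suc (2 * (m - 2))" using assms by simp
    then show ?thesis by simp
  qed
  finally show ?thesis using assms by simp
qed

lemma funpow_split: "N = a + b \<Longrightarrow> (f ^^ N) x = (f ^^ a) ((f ^^ b) x)"
  by (simp add: funpow_add)

lemma WP3: assumes "2 \<le> m" "1 \<le> j" "j \<le> m" shows "fst (wA m (wP_word m) (j, 1)) = 2*m - 1 - j"
proof -
  define f where "f = wA m [2..<m+1]"
  have W: "wA m (wP_word m) x = (f ^^ (m - 1)) x" for x unfolding wP_word_def wA_rep f_def ..
  consider (one) "j = 1" | (mid) "2 \<le> j" "j \<le> m - 1" | (top) "j = m" using assms by linarith
  then show ?thesis
  proof cases
    case one
    have "(f ^^ (m - 1)) (1,1) = (f ^^ (m - 2)) ((f ^^ 1) (1,1))"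
      by (rule funpow_split) (use assms in simp)
    also have "(f ^^ 1) (1,1) = (m, 1)" unfolding f_def using R1[OF assms(1), of 2 1] assms by simp
    also have "(f ^^ (m - 2)) (m, 1) = (m + (m - 2), 1)" unfolding f_def by (rule iterR3) (use assms in auto)
    finally show ?thesis using one assms W by simp
  next
    case mid
    have "(f ^^ (m - 1)) (j,1) = (f ^^ (m - 1 - j)) ((f ^^ 1) ((f ^^ (j - 1)) (j,1)))"
      using funpow_split[of "m - 1" "m - 1 - j" "j" f "(j,1)"] funpow_split[of j 1 "j - 1" f "(j,1)"] mid
      by simp
    also have "(f ^^ (j - 1)) (j,1) = (1, (-1)^(j-1))"
      unfolding f_def using iterR2[OF assms(1), of 2 "j - 1" j 1] mid by simp
    also have "(f ^^ 1) (1, (-1)^(j-1)) = (m, (-1)^(j-1))" unfolding f_def using R1[OF assms(1), of 2] assms by simp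
    also have "(f ^^ (m - 1 - j)) (m, (-1)^(j-1)) = (m + (m - 1 - j), (-1)^(j-1))"
      unfolding f_def by (rule iterR3) (use assms mid in auto)
    finally show ?thesis using mid assms W by simp
  next
    case top
    have "(f ^^ (m - 1)) (m,1) = (f ^^ 1) ((f ^^ (m - 2)) (m,1))"
      by (rule funpow_split) (use assms in simp)
    also have "(f ^^ (m - 2)) (m,1) = (m + (m - 2), 1)" unfolding f_def by (rule iterR3) (use assms in auto)
    also have "m + (m - 2) = 2*m - 2" using assms by simp
    also have "(f ^^ 1) (2*m - 2, 1) = (m - 1, (-1)^(m + 1 - 2))" unfolding f_def using R4[OF assms(1), of 2 1] assms by simp
    finally show ?thesis using top assms W by simp
  qed
qed

lemma W0: assumes "2 \<le> m" shows "fst (wA m (w0_word m) (2*m - 1, 1)) = 0"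
proof -
  define f where "f = wA m [1..<m+1]"
  have e: "f ^^ m = f ^^ (m - 1) \<circ> f" using funpow_Suc_right[of "m - 1" f] assms
    by (simp del: funpow.simps)
  have "wA m (w0_word m) (2*m - 1, 1) = (f ^^ m) (2*m - 1, 1)"
    by (simp add: w0_word_def wA_rep f_def)
  also have "\<dots> = (f ^^ (m - 1)) (f (2*m - 1, 1))" unfolding e by simp
  also have "f (2*m - 1, 1) = (m - 1, (-1)^(m+1-1))" unfolding f_def using R4[OF assms, of 1 1] assms by simp
  also have "(f ^^ (m - 1)) (m - 1, (-1)^(m+1-1)) = (m - 1 - (m - 1), (-1)^(m-1) * (-1)^(m+1-1))"
    unfolding f_def by (rule iterR2) (use assms in auto)
  finally show ?thesis by simp
qed




lemma actP_invol: "Pgood P n \<Longrightarrow> j < n \<Longrightarrow> actP P (actP P j) = j"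
  unfolding Pgood_def actP_def by auto

lemma wA_Cons1: "wA m (i#ws) (j,1) = (fst (wA m ws (actP (PS m i) j, 1)), sgnP (PS m i) j * snd (wA m ws (actP (PS m i) j, 1)))"
  using wA_scale[of m ws "actP (PS m i) j" "sgnP (PS m i) j"] by (simp add: stepA_def)

lemma wA_inj: assumes "2 \<le> m" "\<forall>i\<in>set ws. 1 \<le> i \<and> i \<le> m" "j < 2*m" "j' < 2*m"
    "fst (wA m ws (j,1)) = fst (wA m ws (j',1))"
  shows "j = j'"
  using assms(2-5)
proof (induction ws arbitrary: j j')
  case Nil then show ?case by simp
next
  case (Cons i ws)
  have i: "1 \<le> i" "i \<le> m" using Cons by auto
  have g: "Pgood (PS m i) (2*m)" using PS_good[OF assms(1) i] .
  have "fst (wA m ws (actP (PS m i) j,1)) = fst (wA m ws (actP (PS m i) j',1))"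
    using Cons(5) unfolding wA_Cons1 by simp
  moreover have "actP (PS m i) j < 2*m" "actP (PS m i) j' < 2*m" using actP_lt[OF g] Cons(3,4) by auto
  ultimately have "actP (PS m i) j = actP (PS m i) j'"
    using Cons.IH Cons(2) by simp
  then show ?case using actP_invol[OF g Cons(3)] actP_invol[OF g Cons(4)] by metis
qed

lemma wA_snd_nz: "snd (wA m ws (j,1)) \<noteq> 0"
proof (induction ws arbitrary: j)
  case Nil then show ?case by simp
next
  case (Cons i ws)
  have "snd (wA m (i#ws) (j,1)) = sgnP (PS m i) j * snd (wA m ws (actP (PS m i) j,1))"
    unfolding wA_Cons1 by simp
  moreover have "sgnP (PS m i) j \<noteq> 0" by (simp add: sgnP_def)
  ultimately show ?case using Cons by simp
qed

lemma sum_delta_mult': "p < (n::nat) \<Longrightarrow> (\<Sum>k<n. (f k::complex) * (if k = p then a else 0)) = f p * a"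
  using sum_delta_mult[of p n a f] by (simp add: mult.commute)

lemma mult_col_single:
  fixes A B :: "complex mat"
  assumes "A \<in> carrier_mat n n" "B \<in> carrier_mat n n" "j < n" "c < n"
    and "\<forall>k<n. B$$(k,c) = (if k = p then \<beta> else 0)" and "p < n"
  shows "(A*B)$$(j,c) = A$$(j,p) * \<beta>"
proof -
  have "(A*B)$$(j,c) = (\<Sum>k<n. A$$(j,k) * (if k = p then \<beta> else 0))"
    unfolding mult_entry[OF assms(1-4)] by (rule sum.cong) (use assms in auto)
  then show ?thesis using sum_delta_mult'[OF assms(6)] by simp
qed

lemma mult_row_single:
  fixes A B :: "complex mat"
  assumes "A \<in> carrier_mat n n" "B \<in> carrier_mat n n" "j < n" "c < n"
    and "\<forall>k<n. A$$(j,k) = (if k = p then \<alpha> else 0)" and "p < n"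
  shows "(A*B)$$(j,c) = \<alpha> * B$$(p,c)"
  using row_two[OF assms(1-4), of p \<alpha> 0 False 0] assms by simp

lemma diag_row: assumes "A \<in> carrier_mat n n" "diagonal_mat A" "r < n"
  shows "\<forall>k<n. A$$(r,k) = (if k = r then A$$(r,r) else 0)"
  using assms unfolding diagonal_mat_def by auto

lemma diag_sandwich:
  fixes A J :: "complex mat"
  assumes A: "A \<in> carrier_mat n n" "diagonal_mat A" and J: "J \<in> carrier_mat n n" and rc: "r < n" "c < n"
  shows "(transpose_mat A * J * A)$$(r,c) = A$$(r,r) * J$$(r,c) * A$$(c,c)"
proof -
  have At: "transpose_mat A \<in> carrier_mat n n" using A by simp
  have AJ: "transpose_mat A * J \<in> carrier_mat n n" using At J by simp
  have colA: "\<forall>k<n. A$$(k,c) = (if k = c then A$$(c,c) else 0)"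
    using A rc unfolding diagonal_mat_def by auto
  have rowAt: "\<forall>k<n. transpose_mat A $$(r,k) = (if k = r then A$$(r,r) else 0)"
    using A rc unfolding diagonal_mat_def by auto
  have "(transpose_mat A * J * A)$$(r,c) = (transpose_mat A * J)$$(r,c) * A$$(c,c)"
    by (rule mult_col_single[OF AJ A(1) rc colA rc(2)])
  also have "(transpose_mat A * J)$$(r,c) = A$$(r,r) * J$$(r,c)"
    by (rule mult_row_single[OF At J rc rowAt rc(1)])
  finally show ?thesis .
qed

lemma Jmat_entry: "a < 2*m \<Longrightarrow> b < 2*m \<Longrightarrow> Jmat m $$ (a,b) = (if a + 1 + (b + 1) = 2*m + 1 then (-1) ^ (a + 1) else 0)"
  by (simp add: Jmat_def)
lemma Jmat_c[simp]: "Jmat m \<in> carrier_mat (2*m) (2*m)" by (simp add: Jmat_def)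

lemma sum_single: assumes "p < (n::nat)" "\<forall>k<n. k \<noteq> p \<longrightarrow> f k = (0::complex)"
  shows "(\<Sum>k<n. f k) = f p"
proof -
  have "(\<Sum>k<n. f k) = (\<Sum>k<n. if k = p then f p else 0)" by (rule sum.cong) (use assms in auto)
  also have "\<dots> = f p" using assms by (subst sum.delta) auto
  finally show ?thesis .
qed

lemma sum_two: assumes "p < (n::nat)" "q < n" "p \<noteq> q" "\<forall>k<n. k \<noteq> p \<and> k \<noteq> q \<longrightarrow> f k = (0::complex)"
  shows "(\<Sum>k<n. f k) = f p + f q"
proof -
  have "(\<Sum>k<n. f k) = (\<Sum>k<n. (if k = p then f p else 0) + (if k = q then f q else 0))"
    by (rule sum.cong) (use assms in auto)
  also have "\<dots> = f p + f q" using assms by (simp add: sum.distrib)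
  finally show ?thesis .
qed



definition LT :: "nat \<Rightarrow> complex mat \<Rightarrow> bool" where
  "LT n M \<longleftrightarrow> M \<in> carrier_mat n n \<and> (\<forall>r<n. \<forall>c<n. r < c \<longrightarrow> M$$(r,c) = 0) \<and> (\<forall>r<n. M$$(r,r) = 1)"
definition BD :: "nat \<Rightarrow> nat \<Rightarrow> complex mat \<Rightarrow> bool" where
  "BD n k M \<longleftrightarrow> (\<forall>r<n. \<forall>c<n. c + k < r \<longrightarrow> M$$(r,c) = 0)"

lemma LT_mult: assumes "LT n A" "LT n B" shows "LT n (A*B)"
proof -
  have A: "A \<in> carrier_mat n n" and B: "B \<in> carrier_mat n n" using assms by (auto simp: LT_def)
  have up: "(A*B)$$(r,c) = 0" if "r < n" "c < n" "r < c" for r c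
  proof -
    have "(A*B)$$(r,c) = (\<Sum>k<n. A$$(r,k) * B$$(k,c))" by (rule mult_entry[OF A B that(1,2)])
    also have "\<dots> = 0"
    proof (rule sum.neutral, intro ballI)
      fix k assume "k \<in> {..<n}"
      then show "A$$(r,k) * B$$(k,c) = 0" using assms that unfolding LT_def
        by (cases "r < k") auto
    qed
    finally show ?thesis .
  qed
  have dg: "(A*B)$$(r,r) = 1" if "r < n" for r
  proof -
    have "(A*B)$$(r,r) = (\<Sum>k<n. A$$(r,k) * B$$(k,r))" by (rule mult_entry[OF A B that that])
    also have "\<dots> = A$$(r,r) * B$$(r,r)"
    proof -
      have "\<forall>k<n. k \<noteq> r \<longrightarrow> A$$(r,k) * B$$(k,r) = 0"
      proof (intro allI impI)
        fix k assume "k < n" "k \<noteq> r"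
        then show "A$$(r,k) * B$$(k,r) = 0" using assms that unfolding LT_def
          by (cases "r < k") auto
      qed
      from sum_single[OF that this] show ?thesis .
    qed
    also have "\<dots> = 1" using assms that by (auto simp: LT_def)
    finally show ?thesis .
  qed
  show ?thesis using A B up dg unfolding LT_def by auto
qed

lemma sub_mult: assumes "LT n A" "LT n B" "j + 1 < n"
  shows "(A*B)$$(j+1,j) = A$$(j+1,j) + B$$(j+1,j)"
proof -
  have A: "A \<in> carrier_mat n n" and B: "B \<in> carrier_mat n n" using assms by (auto simp: LT_def)
  have "(A*B)$$(j+1,j) = (\<Sum>k<n. A$$(j+1,k) * B$$(k,j))" by (rule mult_entry[OF A B]) (use assms in auto)
  also have "\<dots> = A$$(j+1,j) * B$$(j,j) + A$$(j+1,j+1) * B$$(j+1,j)"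
  proof -
    have "\<forall>k<n. k \<noteq> j \<and> k \<noteq> j + 1 \<longrightarrow> A$$(j+1,k) * B$$(k,j) = 0"
    proof (intro allI impI)
      fix k assume k: "k < n" "k \<noteq> j \<and> k \<noteq> j + 1"
      then show "A$$(j+1,k) * B$$(k,j) = 0" using assms unfolding LT_def
        by (cases "j + 1 < k") auto
    qed
    from sum_two[OF _ _ _ this] show ?thesis using assms by simp
  qed
  also have "\<dots> = A$$(j+1,j) + B$$(j+1,j)" using assms by (auto simp: LT_def)
  finally show ?thesis .
qed

lemma BD_mult: assumes A: "A \<in> carrier_mat n n" and B: "B \<in> carrier_mat n n"
  and "BD n k1 A" "BD n k2 B"
  shows "BD n (k1+k2) (A*B)"
  and "r < n \<Longrightarrow> c + k1 + k2 = r \<Longrightarrow> (A*B)$$(r,c) = A$$(r, r - k1) * B$$(r - k1, c)"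
proof -
  show "BD n (k1+k2) (A*B)" unfolding BD_def
  proof (intro allI impI)
    fix r c assume rc: "r < n" "c < n" "c + (k1 + k2) < r"
    have "(A*B)$$(r,c) = (\<Sum>k<n. A$$(r,k) * B$$(k,c))" by (rule mult_entry[OF A B rc(1,2)])
    also have "\<dots> = 0"
    proof (rule sum.neutral, intro ballI)
      fix k assume "k \<in> {..<n}"
      then show "A$$(r,k) * B$$(k,c) = 0" using assms rc unfolding BD_def
        by (cases "k + k1 < r") auto
    qed
    finally show "(A*B)$$(r,c) = 0" .
  qed
next
  assume rc: "r < n" "c + k1 + k2 = r"
  have c: "c < n" using rc by simp
  have "(A*B)$$(r,c) = (\<Sum>k<n. A$$(r,k) * B$$(k,c))" by (rule mult_entry[OF A B rc(1) c])
  also have "\<dots> = A$$(r, r - k1) * B$$(r - k1, c)"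
  proof -
    have "\<forall>k<n. k \<noteq> r - k1 \<longrightarrow> A$$(r,k) * B$$(k,c) = 0"
    proof (intro allI impI)
      fix k assume "k < n" "k \<noteq> r - k1"
      then show "A$$(r,k) * B$$(k,c) = 0" using assms rc unfolding BD_def
        by (cases "k + k1 < r") auto
    qed
    from sum_single[OF _ this] show ?thesis using rc by simp
  qed
  finally show "(A*B)$$(r,c) = A$$(r, r - k1) * B$$(r - k1, c)" .
qed

lemma y_LT: assumes "2 \<le> m" "1 \<le> i" "i \<le> m" shows "LT (2*m) (y_el m i t)" "BD (2*m) 1 (y_el m i t)"
  using y_el_entry[OF assms] y_el_c[OF assms] unfolding LT_def BD_def by auto

lemma one_LT: "LT n (1\<^sub>m n)" "BD n 0 (1\<^sub>m n)" unfolding LT_def BD_def by auto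

definition AF :: "nat \<Rightarrow> (nat \<Rightarrow> complex) \<Rightarrow> nat \<Rightarrow> complex mat \<Rightarrow> complex mat" where
  "AF m a k T = foldr (\<lambda>i M. y_el m i (a i) * M) [k..<m] T"
definition BF :: "nat \<Rightarrow> (nat \<Rightarrow> complex) \<Rightarrow> nat \<Rightarrow> complex mat" where
  "BF m b k = foldr (\<lambda>i M. M * y_el m i (b i)) [k..<m] (1\<^sub>m (2*m))"

lemma AF_step: "k < m \<Longrightarrow> AF m a k T = y_el m k (a k) * AF m a (Suc k) T"
  by (simp add: AF_def upt_conv_Cons)
lemma BF_step: "k < m \<Longrightarrow> BF m b k = BF m b (Suc k) * y_el m k (b k)"
  by (simp add: BF_def upt_conv_Cons)
lemma AF_base: "AF m a m T = T" by (simp add: AF_def)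
lemma BF_base: "BF m b m = 1\<^sub>m (2*m)" by (simp add: BF_def)

lemma ubar_AF: "ubar_form m a c b = AF m a 1 (y_el m m c * BF m b 1)"
  by (simp add: ubar_form_def AF_def BF_def)

lemma y_sub_low: assumes "2 \<le> m" "1 \<le> k" "k \<le> m" "j \<le> m - 1"
  shows "y_el m k t $$ (j+1, j) = (if j = k - 1 then t else 0)"
proof -
  have "j \<in> PS m k \<longleftrightarrow> j = k - 1" using assms by (auto simp: PS_def)
  then show ?thesis using y_el_entry[OF assms(1-3), of "j+1" j t] assms by simp
qed

lemma BF_props: assumes "2 \<le> m" "1 \<le> k" "k \<le> m"
  shows "LT (2*m) (BF m b k) \<and> BD (2*m) (m - k) (BF m b k)
    \<and> (\<forall>j. j \<le> m - 1 \<longrightarrow> BF m b k $$ (j+1,j) = (if k \<le> j+1 \<and> j+1 < m then b (j+1) else 0))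
    \<and> BF m b k $$ (m - 1, k - 1) = (\<Prod>i=k..<m. b i)"
  using assms(3,2)
proof (induction k rule: inc_induct)
  case base
  show ?case using assms(1) one_LT[of "2*m"] by (auto simp: BF_base)
next
  case (step k)
  have k: "1 \<le> k" "k \<le> m" using step by auto
  note IH = step.IH[OF le_trans[OF step.prems le_SucI[OF order_refl]]]
  let ?A = "BF m b (Suc k)" and ?Y = "y_el m k (b k)"
  have A: "?A \<in> carrier_mat (2*m) (2*m)" using IH by (auto simp: LT_def)
  have Yc: "?Y \<in> carrier_mat (2*m) (2*m)" using y_el_c[OF assms(1) k] .
  have eq: "BF m b k = ?A * ?Y" using BF_step step by simp
  have LT: "LT (2*m) (BF m b k)" unfolding eq by (rule LT_mult) (use IH y_LT[OF assms(1) k] in auto)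
  have "BD (2*m) ((m - Suc k) + 1) (?A * ?Y)"
    by (rule BD_mult(1)[OF A Yc]) (use IH y_LT[OF assms(1) k] in auto)
  moreover have "(m - Suc k) + 1 = m - k" using step by simp
  ultimately have BD: "BD (2*m) (m - k) (BF m b k)" unfolding eq by simp
  have sub: "BF m b k $$ (j+1,j) = (if k \<le> j+1 \<and> j+1 < m then b (j+1) else 0)" if "j \<le> m - 1" for j
  proof -
    have "BF m b k $$ (j+1,j) = ?A $$ (j+1,j) + ?Y $$ (j+1,j)"
      unfolding eq by (rule sub_mult) (use IH y_LT[OF assms(1) k] that assms in auto)
    also have "\<dots> = (if Suc k \<le> j+1 \<and> j+1 < m then b (j+1) else 0) + (if j = k - 1 then b k else 0)"
      using IH that y_sub_low[OF assms(1) k that] by simp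
    also have "\<dots> = (if k \<le> j+1 \<and> j+1 < m then b (j+1) else 0)" using step k by auto
    finally show ?thesis .
  qed
  have "BF m b k $$ (m - 1, k - 1) = ?A $$ (m - 1, m - 1 - (m - Suc k)) * ?Y $$ (m - 1 - (m - Suc k), k - 1)"
    unfolding eq by (rule BD_mult(2)[OF A Yc]) (use IH y_LT[OF assms(1) k] step in auto)
  also have "m - 1 - (m - Suc k) = k" using step by simp
  also have "?Y $$ (k, k - 1) = b k" using y_sub_low[OF assms(1) k, of "k - 1" "b k"] k step by simp
  also have "?A $$ (m - 1, k) = (\<Prod>i=Suc k..<m. b i)" using IH by simp
  also have "(\<Prod>i=Suc k..<m. b i) * b k = (\<Prod>i=k..<m. b i)" using step
    by (simp add: prod.atLeast_Suc_lessThan mult.commute)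
  finally show ?case using LT BD sub by blast
qed

lemma AF_props: assumes "2 \<le> m" "1 \<le> k" "k \<le> m" "LT (2*m) T" "BD (2*m) m T"
  shows "LT (2*m) (AF m a k T) \<and> BD (2*m) (m - k + m) (AF m a k T)
    \<and> (\<forall>j. j \<le> m - 1 \<longrightarrow> AF m a k T $$ (j+1,j) = (if k \<le> j+1 \<and> j+1 < m then a (j+1) else 0) + T $$ (j+1,j))
    \<and> AF m a k T $$ (2*m - k, 0) = (\<Prod>i=k..<m. a i) * T $$ (m, 0)"
  using assms(3,2)
proof (induction k rule: inc_induct)
  case base
  show ?case using assms by (auto simp: AF_base)
next
  case (step k)
  have k: "1 \<le> k" "k \<le> m" using step by auto
  note IH = step.IH[OF le_trans[OF step.prems le_SucI[OF order_refl]]]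
  let ?A = "AF m a (Suc k) T" and ?Y = "y_el m k (a k)"
  have A: "?A \<in> carrier_mat (2*m) (2*m)" using IH by (auto simp: LT_def)
  have Yc: "?Y \<in> carrier_mat (2*m) (2*m)" using y_el_c[OF assms(1) k] .
  have eq: "AF m a k T = ?Y * ?A" using AF_step step by simp
  have LT: "LT (2*m) (AF m a k T)" unfolding eq by (rule LT_mult) (use IH y_LT[OF assms(1) k] in auto)
  have "BD (2*m) (1 + (m - Suc k + m)) (?Y * ?A)"
    by (rule BD_mult(1)[OF Yc A]) (use IH y_LT[OF assms(1) k] in auto)
  moreover have e: "1 + (m - Suc k + m) = m - k + m" using step by simp
  ultimately have BD: "BD (2*m) (m - k + m) (AF m a k T)" unfolding eq by (simp only: e)
  have sub: "AF m a k T $$ (j+1,j) = (if k \<le> j+1 \<and> j+1 < m then a (j+1) else 0) + T $$ (j+1,j)" if "j \<le> m - 1" for j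
  proof -
    have "AF m a k T $$ (j+1,j) = ?Y $$ (j+1,j) + ?A $$ (j+1,j)"
      unfolding eq by (rule sub_mult) (use IH y_LT[OF assms(1) k] that assms in auto)
    also have "\<dots> = (if j = k - 1 then a k else 0) + ((if Suc k \<le> j+1 \<and> j+1 < m then a (j+1) else 0) + T $$ (j+1,j))"
      using IH that y_sub_low[OF assms(1) k that] by simp
    also have "\<dots> = (if k \<le> j+1 \<and> j+1 < m then a (j+1) else 0) + T $$ (j+1,j)" using step k by auto
    finally show ?thesis .
  qed
  have "AF m a k T $$ (2*m - k, 0) = ?Y $$ (2*m - k, 2*m - k - 1) * ?A $$ (2*m - k - 1, 0)"
    unfolding eq by (rule BD_mult(2)[OF Yc A]) (use IH y_LT[OF assms(1) k] step in auto)
  also have "2*m - k - 1 = 2*m - Suc k" by simp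
  also have "?Y $$ (2*m - k, 2*m - Suc k) = a k"
  proof -
    have "2*m - Suc k \<in> PS m k" using step by (auto simp: PS_def)
    moreover have "2*m - k = 2*m - Suc k + 1" using step by simp
    ultimately show ?thesis using y_el_entry[OF assms(1) k, of "2*m - k" "2*m - Suc k" "a k"] step by simp
  qed
  also have "?A $$ (2*m - Suc k, 0) = (\<Prod>i=Suc k..<m. a i) * T $$ (m, 0)" using IH by simp
  also have "a k * ((\<Prod>i=Suc k..<m. a i) * T $$ (m, 0)) = (\<Prod>i=k..<m. a i) * T $$ (m, 0)" using step
    by (simp add: prod.atLeast_Suc_lessThan)
  finally show ?case using LT BD sub by blast
qed

lemma u2_props: assumes "2 \<le> m"
  shows "\<forall>j. j \<le> m - 1 \<longrightarrow> ubar_form m a c b $$ (j+1,j) = (if j+1 < m then a (j+1) + b (j+1) else c)"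
    "ubar_form m a c b $$ (2*m - 1, 0) = (\<Prod>i=1..<m. a i) * c * (\<Prod>i=1..<m. b i)"
    "ubar_form m a c b \<in> carrier_mat (2*m) (2*m)"
proof -
  have m1: "1 \<le> m" "m \<le> m" using assms by auto
  note Bp = BF_props[OF assms order_refl m1(1), of b]
  let ?Y = "y_el m m c" and ?B = "BF m b 1"
  have Yc: "?Y \<in> carrier_mat (2*m) (2*m)" using y_el_c[OF assms m1] .
  have B: "?B \<in> carrier_mat (2*m) (2*m)" using Bp by (auto simp: LT_def)
  have TLT: "LT (2*m) (?Y * ?B)" by (rule LT_mult) (use Bp y_LT[OF assms m1] in auto)
  have "BD (2*m) (1 + (m - 1)) (?Y * ?B)"
    by (rule BD_mult(1)[OF Yc B]) (use Bp y_LT[OF assms m1] in auto)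
  then have TBD: "BD (2*m) m (?Y * ?B)" using assms by simp
  have Tsub: "(?Y * ?B) $$ (j+1,j) = (if j = m - 1 then c else 0) + (if j+1 < m then b (j+1) else 0)" if "j \<le> m - 1" for j
  proof -
    have "(?Y * ?B) $$ (j+1,j) = ?Y $$ (j+1,j) + ?B $$ (j+1,j)"
      by (rule sub_mult) (use Bp y_LT[OF assms m1] that assms in auto)
    then show ?thesis using Bp that y_sub_low[OF assms m1 that] by simp
  qed
  have Tc: "(?Y * ?B) $$ (m, 0) = ?Y $$ (m, m - 1) * ?B $$ (m - 1, 0)"
    by (rule BD_mult(2)[OF Yc B]) (use Bp y_LT[OF assms m1] assms in auto)
  also have "?Y $$ (m, m - 1) = c" using y_sub_low[OF assms m1, of "m - 1" c] assms by simp
  finally have Tc: "(?Y * ?B) $$ (m, 0) = c * (\<Prod>i=1..<m. b i)" using Bp by simp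
  have Ap': "LT (2*m) (AF m a 1 (?Y * ?B)) \<and> BD (2*m) (m - 1 + m) (AF m a 1 (?Y * ?B))
    \<and> (\<forall>j. j \<le> m - 1 \<longrightarrow> AF m a 1 (?Y * ?B) $$ (j+1,j) = (if 1 \<le> j+1 \<and> j+1 < m then a (j+1) else 0) + (?Y * ?B) $$ (j+1,j))
    \<and> AF m a 1 (?Y * ?B) $$ (2*m - 1, 0) = (\<Prod>i=1..<m. a i) * (?Y * ?B) $$ (m, 0)"
    using AF_props[where k=1 and a=a and T="?Y * ?B", OF assms _ _ TLT TBD] assms by simp
  show "\<forall>j. j \<le> m - 1 \<longrightarrow> ubar_form m a c b $$ (j+1,j) = (if j+1 < m then a (j+1) + b (j+1) else c)"
    unfolding ubar_AF using Ap' Tsub assms by auto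
  show "ubar_form m a c b $$ (2*m - 1, 0) = (\<Prod>i=1..<m. a i) * c * (\<Prod>i=1..<m. b i)"
    unfolding ubar_AF using Ap' Tc by simp
  show "ubar_form m a c b \<in> carrier_mat (2*m) (2*m)"
    unfolding ubar_AF using Ap' by (simp add: LT_def)
qed



lemma wP_valid: "\<forall>i\<in>set (wP_word m). 1 \<le> i \<and> i \<le> m" by (auto simp: wP_word_def)
lemma w0_valid: "\<forall>i\<in>set (w0_word m). 1 \<le> i \<and> i \<le> m" by (auto simp: w0_word_def)

lemma Uplus_props: assumes "u \<in> Uplus m"
  shows "u \<in> carrier_mat (2*m) (2*m)" "transpose_mat u * Jmat m * u = Jmat m"
    "\<And>i j. i < 2*m \<Longrightarrow> j < i \<Longrightarrow> u $$ (i,j) = 0" "\<And>k. k < 2*m \<Longrightarrow> u $$ (k,k) = 1"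
proof -
  show c: "u \<in> carrier_mat (2*m) (2*m)" using assms by (simp add: Uplus_def Bplus_def Sp_def)
  show "transpose_mat u * Jmat m * u = Jmat m" using assms by (simp add: Uplus_def Bplus_def Sp_def)
  show "\<And>i j. i < 2*m \<Longrightarrow> j < i \<Longrightarrow> u $$ (i,j) = 0"
    using assms c by (auto simp: Uplus_def Bplus_def upper_triangular_def)
  fix k assume "k < 2*m"
  then have "k + 1 \<in> {1..2*m}" by simp
  moreover have "\<forall>i\<in>{1..2*m}. ent u i i = 1" using assms by (simp add: Uplus_def)
  ultimately have "ent u (k+1) (k+1) = 1" by blast
  then show "u $$ (k,k) = 1" by (simp add: ent_def)
qed

lemma u1_sym: assumes "2 \<le> m" "u \<in> Uplus m" shows "u $$ (0,1) = u $$ (2*m - 2, 2*m - 1)"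
proof -
  note U = Uplus_props[OF assms(2)]
  let ?J = "Jmat m" and ?n = "2*m"
  have Ut: "transpose_mat u \<in> carrier_mat ?n ?n" using U(1) by simp
  have UJ: "transpose_mat u * ?J \<in> carrier_mat ?n ?n" using Ut by simp
  have rowUt: "\<forall>k<?n. transpose_mat u $$ (1,k) = (if k = 1 then 1 else 0) + (if k = 0 \<and> True then u$$(0,1) else 0)"
  proof (intro allI impI)
    fix k assume k: "k < ?n"
    show "transpose_mat u $$ (1,k) = (if k = 1 then 1 else 0) + (if k = 0 \<and> True then u$$(0,1) else 0)"
      using k U(1,3,4) assms(1) by auto
  qed
  have r1: "(transpose_mat u * ?J) $$ (1,l) = 1 * ?J $$ (1,l) + (if True then u$$(0,1) * ?J $$ (0,l) else 0)" if "l < ?n" for l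
    by (rule row_two[OF Ut Jmat_c _ that rowUt]) (use assms in auto)
  have rowUJ: "\<forall>l<?n. (transpose_mat u * ?J) $$ (1,l) = (if l = ?n - 2 then 1 else 0) + (if l = ?n - 1 \<and> True then - u$$(0,1) else 0)"
  proof (intro allI impI)
    fix l assume l: "l < ?n"
    have "?J $$ (1,l) = (if l = ?n - 2 then 1 else 0)" using l assms Jmat_entry[of 1 m l] by auto
    moreover have "?J $$ (0,l) = (if l = ?n - 1 then -1 else 0)" using l assms Jmat_entry[of 0 m l] by auto
    ultimately show "(transpose_mat u * ?J) $$ (1,l) = (if l = ?n - 2 then 1 else 0) + (if l = ?n - 1 \<and> True then - u$$(0,1) else 0)"
      using r1[OF l] assms by auto
  qed
  have "(transpose_mat u * ?J * u) $$ (1, ?n - 1) = 1 * u $$ (?n - 2, ?n - 1) + (if True then - u$$(0,1) * u $$ (?n - 1, ?n - 1) else 0)"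
    by (rule row_two[OF UJ U(1) _ _ rowUJ]) (use assms in auto)
  moreover have "(transpose_mat u * ?J * u) $$ (1, ?n - 1) = 0" using U(2) Jmat_entry[of 1 m "?n - 1"] assms by simp
  moreover have "u $$ (?n - 1, ?n - 1) = 1" using U(4) assms by simp
  ultimately show ?thesis by simp
qed

lemma sdot_row0: assumes "2 \<le> m" "2 \<le> i" "i \<le> m" "k < 2*m"
  shows "sdot m i $$ (0,k) = (if k = 0 then 1 else 0)"
proof -
  have "0 \<notin> PS m i" using assms by (auto simp: PS_def)
  then show ?thesis using sdot_entry[OF assms(1) _ assms(3), of 0 k] assms by (simp add: actP_def sgnP_def)
qed

lemma sdot_rowi: assumes "2 \<le> m" "1 \<le> i" "i \<le> m" "k < 2*m"
  shows "sdot m i $$ (i - 1,k) = (if k = i then 1 else 0)"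
proof -
  have "i - 1 \<in> PS m i" using assms by (auto simp: PS_def)
  then show ?thesis using sdot_entry[OF assms(1-3), of "i - 1" k] assms by (simp add: actP_def sgnP_def)
qed

lemma d_facts: assumes m: "2 \<le> m" and d: "d \<in> TWP m"
  shows "d $$ (0,0) * d $$ (2*m - 1, 2*m - 1) = 1" "d $$ (1,1) * d $$ (1,1) = 1"
    "d \<in> carrier_mat (2*m) (2*m)" "diagonal_mat d"
proof -
  let ?n = "2*m" and ?J = "Jmat m"
  have dc: "d \<in> carrier_mat ?n ?n" and dS: "transpose_mat d * ?J * d = ?J" and dd: "diagonal_mat d"
    and ds: "\<forall>i\<in>{2..m}. peq (sdot m i * d) (d * sdot m i)"
    using d by (auto simp: TWP_def Torus_def Sp_def)
  show "d \<in> carrier_mat (2*m) (2*m)" "diagonal_mat d" using dc dd by auto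
  have F1: "d $$ (0,0) * d $$ (?n - 1, ?n - 1) = 1"
  proof -
    have "?J $$ (0, ?n - 1) = d $$ (0,0) * ?J $$ (0, ?n - 1) * d $$ (?n - 1, ?n - 1)"
      using diag_sandwich[OF dc dd Jmat_c, of 0 "?n - 1"] dS m by simp
    moreover have "?J $$ (0, ?n - 1) = -1" using Jmat_entry[of 0 m "?n - 1"] m by simp
    ultimately show ?thesis by simp
  qed
  then show "d $$ (0,0) * d $$ (2*m - 1, 2*m - 1) = 1" .
  have F2: "d $$ (m - 1, m - 1) * d $$ (m, m) = 1"
  proof -
    have "?J $$ (m - 1, m) = d $$ (m - 1, m - 1) * ?J $$ (m - 1, m) * d $$ (m, m)"
      using diag_sandwich[OF dc dd Jmat_c, of "m - 1" m] dS m by simp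
    moreover have "?J $$ (m - 1, m) = (-1)^m" using Jmat_entry[of "m - 1" m m] m by simp
    ultimately show ?thesis by simp
  qed
  have colD: "\<forall>k<?n. d $$ (k,c) = (if k = c then d $$ (c,c) else 0)" if "c < ?n" for c
    using dc dd that unfolding diagonal_mat_def by auto
  have F3: "d $$ (i - 1, i - 1) = d $$ (i,i)" if i: "2 \<le> i" "i \<le> m" for i
  proof -
    have i1: "1 \<le> i" using i by simp
    have sc: "sdot m i \<in> carrier_mat ?n ?n" using sdot_c[OF m i1 i(2)] .
    have pe: "peq (sdot m i * d) (d * sdot m i)" using ds i by auto
    have e00: "(sdot m i * d) $$ (0,0) = d $$ (0,0)"
      using mult_col_single[OF sc dc _ _ colD, of 0 0] sdot_row0[OF m i, of 0] m by simp
    have e00': "(d * sdot m i) $$ (0,0) = d $$ (0,0)"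
      using mult_row_single[OF dc sc _ _ diag_row[OF dc dd], of 0 0] sdot_row0[OF m i, of 0] m by simp
    have d0: "d $$ (0,0) \<noteq> 0" using F1 by auto
    have eq: "sdot m i * d = d * sdot m i"
    proof (rule ccontr)
      assume "sdot m i * d \<noteq> d * sdot m i"
      then have "sdot m i * d = - (d * sdot m i)" using pe by (simp add: peq_def)
      then have "(sdot m i * d) $$ (0,0) = - ((d * sdot m i) $$ (0,0))" using sc dc m by simp
      then show False using e00 e00' d0 by simp
    qed
    have ilt: "i - 1 < ?n" "i < ?n" using i by auto
    have "(sdot m i * d) $$ (i - 1, i) = sdot m i $$ (i - 1, i) * d $$ (i,i)"
      by (rule mult_col_single[OF sc dc ilt colD[OF ilt(2)] ilt(2)])
    moreover have "(d * sdot m i) $$ (i - 1, i) = d $$ (i - 1, i - 1) * sdot m i $$ (i - 1, i)"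
      by (rule mult_row_single[OF dc sc ilt diag_row[OF dc dd ilt(1)] ilt(1)])
    moreover have "sdot m i $$ (i - 1, i) = 1" using sdot_rowi[OF m i1 i(2) ilt(2)] by simp
    ultimately show ?thesis using eq by simp
  qed
  have F4: "d $$ (1,1) = d $$ (i,i)" if "1 \<le> i" "i \<le> m" for i
    using that
  proof (induction i)
    case 0 then show ?case by simp
  next
    case (Suc i)
    show ?case
    proof (cases "i = 0")
      case True then show ?thesis by simp
    next
      case False
      then have "d $$ (1,1) = d $$ (i,i)" using Suc by simp
      also have "\<dots> = d $$ (Suc i, Suc i)" using F3[of "Suc i"] Suc False by simp
      finally show ?thesis .
    qed
  qed
  have "d $$ (1,1) = d $$ (m,m)" using F4[of m] m by simp
  moreover have "d $$ (m - 1, m - 1) = d $$ (m,m)" using F3[of m] m by simp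
  ultimately show "d $$ (1,1) * d $$ (1,1) = 1" using F2 by simp
qed

lemma u1_wP: assumes m: "2 \<le> m" and u: "u \<in> Uplus_wP m" and r: "1 \<le> r" "r \<le> m - 1"
  shows "u $$ (r, r+1) = 0"
proof -
  let ?n = "2*m" and ?W = "wPdot m" and ?ws = "wP_word m"
  have uU: "u \<in> Uplus m" using u by (simp add: Uplus_wP_def)
  obtain u' where u': "u' \<in> Uplus m" "peq (u * ?W) (?W * u')" using u by (auto simp: Uplus_wP_def)
  note U = Uplus_props[OF uU] and U' = Uplus_props[OF u'(1)]
  have Wc: "?W \<in> carrier_mat ?n ?n" unfolding wPdot_def by (rule wdot_c[OF m wP_valid])
  define \<pi> where "\<pi> k = fst (wA m ?ws (k,1))" for k
  have Wentry: "?W $$ (k,c) = (if c = \<pi> k then snd (wA m ?ws (k,1)) else 0)" if "k < ?n" "c < ?n" for k c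
    unfolding wPdot_def \<pi>_def by (rule wdot_entry[OF m wP_valid that])
  have rlt: "r < ?n" "r + 1 < ?n" using r m by auto
  have pr: "\<pi> r = 2*m - 1 - r" "\<pi> (r+1) = 2*m - 1 - (r+1)"
    unfolding \<pi>_def using WP3[OF m, of r] WP3[OF m, of "r+1"] r m by auto
  have plt: "\<pi> (r+1) < ?n" "\<pi> r < ?n" using pr m by auto
  have colW: "\<forall>k<?n. ?W $$ (k, \<pi> (r+1)) = (if k = r + 1 then snd (wA m ?ws (r+1,1)) else 0)"
  proof (intro allI impI)
    fix k assume k: "k < ?n"
    have "\<pi> k = \<pi> (r+1) \<Longrightarrow> k = r + 1"
      unfolding \<pi>_def by (rule wA_inj[OF m wP_valid k rlt(2)])
    then show "?W $$ (k, \<pi> (r+1)) = (if k = r + 1 then snd (wA m ?ws (r+1,1)) else 0)"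
      using Wentry[OF k plt(1)] by auto
  qed
  have rowW: "\<forall>k<?n. ?W $$ (r, k) = (if k = \<pi> r then snd (wA m ?ws (r,1)) else 0)"
    using Wentry[OF rlt(1)] by auto
  have L: "(u * ?W) $$ (r, \<pi> (r+1)) = u $$ (r, r+1) * snd (wA m ?ws (r+1,1))"
    by (rule mult_col_single[OF U(1) Wc rlt(1) plt(1) colW rlt(2)])
  have R: "(?W * u') $$ (r, \<pi> (r+1)) = snd (wA m ?ws (r,1)) * u' $$ (\<pi> r, \<pi> (r+1))"
    by (rule mult_row_single[OF Wc U'(1) rlt(1) plt(1) rowW plt(2)])
  have "u' $$ (\<pi> r, \<pi> (r+1)) = 0" using U'(3)[OF plt(2)] pr r m by simp
  then have R0: "(?W * u') $$ (r, \<pi> (r+1)) = 0" using R by simp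
  have "(u * ?W) $$ (r, \<pi> (r+1)) = 0"
  proof (cases "u * ?W = ?W * u'")
    case True then show ?thesis using R0 by simp
  next
    case False
    then have "u * ?W = - (?W * u')" using u'(2) by (simp add: peq_def)
    then show ?thesis using R0 Wc U'(1) rlt plt by simp
  qed
  then show ?thesis using L wA_snd_nz[of m ?ws "r+1"] by simp
qed

theorem mainTheorem6:
  fixes m :: nat and d z u1 u2 :: "complex mat" and a b :: "nat \<Rightarrow> complex" and c :: complex
  assumes "m \<ge> 2"
    and "d \<in> TWP m"
    and "z \<in> Zd m d"
    and "u1 \<in> Uplus_wP m"
    and "u2 \<in> Uminus m"
    and "peq z (u1 * wPdot m * d * u2)"
    and "u2 = ubar_form m a c b"
    and "\<forall>i\<in>{1..<m}. a i \<noteq> 0 \<and> b i \<noteq> 0"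
    and "c \<noteq> 0"
  shows "superpot m u1 u2 =
           (\<Sum>i=1..<m. a i) + c + (\<Sum>i=1..<m. b i)
           + alpha1 d * (a 1 + b 1) / ((\<Prod>i=1..<m. a i) * c * (\<Prod>i=1..<m. b i))"
proof -
  have m: "2 \<le> m" using assms(1) by simp
  let ?n = "2*m" and ?W = "wPdot m" and ?Vz = "w0dot m"
  let ?P = "(\<Prod>i=1..<m. a i) * c * (\<Prod>i=1..<m. b i)"
  note D = d_facts[OF m assms(2)]
  have uU: "u1 \<in> Uplus m" using assms(4) by (simp add: Uplus_wP_def)
  note U = Uplus_props[OF uU]
  note U2 = u2_props[OF m, of a c b, folded assms(7)]
  have Wc: "?W \<in> carrier_mat ?n ?n" unfolding wPdot_def by (rule wdot_c[OF m wP_valid])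
  have W0c: "?Vz \<in> carrier_mat ?n ?n" using wdot_c[OF m w0_valid] by (simp add: w0dot_def)
  have nlt: "?n - 2 < ?n" "?n - 1 < ?n" "0 < ?n" "1 < ?n" using m by auto
  let ?g = "u1 * ?W * d * u2"
  have gc: "?g \<in> carrier_mat ?n ?n" using U(1) Wc D(3) U2(3) by (intro mult_carrier_mat)
  obtain bb where bb: "bb \<in> Bminus m" "peq z (bb * ?Vz)" using assms(3) by (auto simp: Zd_def)
  have bbc: "bb \<in> carrier_mat ?n ?n" using bb by (simp add: Bminus_def Sp_def)
  have bblow: "bb $$ (?n - 2, ?n - 1) = 0"
  proof -
    have "upper_triangular (transpose_mat bb)" using bb by (simp add: Bminus_def lower_triangular_def)
    then have "transpose_mat bb $$ (?n - 1, ?n - 2) = 0" using bbc nlt m by (auto simp: upper_triangular_def)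
    then show ?thesis using bbc nlt by simp
  qed
  have colW0: "\<forall>k<?n. ?Vz $$ (k, 0) = (if k = ?n - 1 then snd (wA m (w0_word m) (?n - 1, 1)) else 0)"
  proof (intro allI impI)
    fix k assume k: "k < ?n"
    have e: "?Vz $$ (k,0) = (if 0 = fst (wA m (w0_word m) (k,1)) then snd (wA m (w0_word m) (k,1)) else 0)"
      unfolding w0dot_def by (rule wdot_entry[OF m w0_valid k nlt(3)])
    have z0: "fst (wA m (w0_word m) (?n - 1, 1)) = 0" using W0[OF m] .
    have inj: "k = ?n - 1" if h: "fst (wA m (w0_word m) (k,1)) = 0"
    proof -
      have "fst (wA m (w0_word m) (k,1)) = fst (wA m (w0_word m) (?n - 1,1))" by (simp only: h z0)
      then show ?thesis by (rule wA_inj[OF m w0_valid k nlt(2)])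
    qed
    show "?Vz $$ (k, 0) = (if k = ?n - 1 then snd (wA m (w0_word m) (?n - 1, 1)) else 0)"
    proof (cases "k = ?n - 1")
      case True
      then show ?thesis using e z0 by simp
    next
      case False
      then have "fst (wA m (w0_word m) (k,1)) \<noteq> 0" using inj by blast
      then show ?thesis using e False by simp
    qed
  qed
  have X0: "(bb * ?Vz) $$ (?n - 2, 0) = 0"
    using mult_col_single[OF bbc W0c nlt(1) nlt(3) colW0 nlt(2)] bblow by simp
  have Xc: "bb * ?Vz \<in> carrier_mat ?n ?n" using bbc W0c by simp
  have g0: "?g $$ (?n - 2, 0) = 0"
  proof -
    have zX: "z $$ (?n - 2, 0) = 0"
    proof (cases "z = bb * ?Vz")
      case True then show ?thesis using X0 by simp
    next
      case False
      then have "z = - (bb * ?Vz)" using bb(2) by (simp add: peq_def)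
      moreover have "(- (bb * ?Vz)) $$ (?n - 2, 0) = - ((bb * ?Vz) $$ (?n - 2, 0))"
        by (rule index_uminus_mat(1)) (use Xc nlt in auto)
      ultimately show ?thesis using X0 by simp
    qed
    show ?thesis
    proof (cases "z = ?g")
      case True then show ?thesis using zX by simp
    next
      case False
      then have "z = - ?g" using assms(6) by (simp add: peq_def)
      moreover have "(- ?g) $$ (?n - 2, 0) = - (?g $$ (?n - 2, 0))"
        by (rule index_uminus_mat(1)) (use gc nlt in auto)
      ultimately have "z $$ (?n - 2, 0) = - (?g $$ (?n - 2, 0))" by simp
      then show ?thesis using zX by simp
    qed
  qed
  have du2c: "d * u2 \<in> carrier_mat ?n ?n" using D(3) U2(3) by simp
  let ?H = "?W * (d * u2)"
  have Hc: "?H \<in> carrier_mat ?n ?n" using Wc du2c by simp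
  have geq: "?g = u1 * ?H"
  proof -
    have uw: "u1 * ?W \<in> carrier_mat ?n ?n" using U(1) Wc by simp
    have "?g = (u1 * ?W) * (d * u2)" by (rule assoc_mult_mat[OF uw D(3) U2(3)])
    also have "\<dots> = u1 * ?H" by (rule assoc_mult_mat[OF U(1) Wc du2c])
    finally show ?thesis .
  qed
  define t where "t = u1 $$ (?n - 2, ?n - 1)"
  have rowU: "\<forall>k<?n. u1 $$ (?n - 2, k) = (if k = ?n - 2 then 1 else 0) + (if k = ?n - 1 \<and> True then t else 0)"
  proof (intro allI impI)
    fix k assume k: "k < ?n"
    consider "k < ?n - 2" | "k = ?n - 2" | "k = ?n - 1" using k by linarith
    then show "u1 $$ (?n - 2, k) = (if k = ?n - 2 then 1 else 0) + (if k = ?n - 1 \<and> True then t else 0)"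
      by cases (use U(3)[OF nlt(1)] U(4)[OF nlt(1)] m t_def in auto)
  qed
  have g1: "?g $$ (?n - 2, 0) = 1 * ?H $$ (?n - 2, 0) + (if True then t * ?H $$ (?n - 1, 0) else 0)"
    unfolding geq by (rule row_two[OF U(1) Hc nlt(1) nlt(3) rowU nlt(1)]) (use nlt in simp)
  have rowW2: "\<forall>k<?n. ?W $$ (?n - 2, k) = (if k = 1 then -1 else 0)"
    using wdot_entry[OF m wP_valid nlt(1)] WP2[OF m] unfolding wPdot_def by auto
  have rowW1: "\<forall>k<?n. ?W $$ (?n - 1, k) = (if k = ?n - 1 then 1 else 0)"
    using wdot_entry[OF m wP_valid nlt(2)] WP1[OF m, of 1] unfolding wPdot_def by auto
  have H2: "?H $$ (?n - 2, 0) = -1 * (d * u2) $$ (1, 0)"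
    by (rule mult_row_single[OF Wc du2c nlt(1) nlt(3) rowW2 nlt(4)])
  have H1: "?H $$ (?n - 1, 0) = 1 * (d * u2) $$ (?n - 1, 0)"
    by (rule mult_row_single[OF Wc du2c nlt(2) nlt(3) rowW1 nlt(2)])
  have du1: "(d * u2) $$ (1, 0) = d $$ (1,1) * u2 $$ (1,0)"
    by (rule mult_row_single[OF D(3) U2(3) nlt(4) nlt(3) diag_row[OF D(3) D(4) nlt(4)] nlt(4)])
  have du2: "(d * u2) $$ (?n - 1, 0) = d $$ (?n - 1, ?n - 1) * u2 $$ (?n - 1,0)"
    by (rule mult_row_single[OF D(3) U2(3) nlt(2) nlt(3) diag_row[OF D(3) D(4) nlt(2)] nlt(2)])
  have u210: "u2 $$ (1,0) = a 1 + b 1" using U2(1)[rule_format, of 0] m by simp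
  have u2c: "u2 $$ (?n - 1, 0) = ?P" using U2(2) .
  have key: "d $$ (1,1) * (a 1 + b 1) = t * (d $$ (?n - 1, ?n - 1) * ?P)"
    using g0 g1 H1 H2 du1 du2 u210 u2c by simp
  have t01: "u1 $$ (0,1) = t" unfolding t_def by (rule u1_sym[OF m uU])
  have Pnz: "?P \<noteq> 0" using assms(8,9) by (auto simp: prod_zero_iff)
  have tval: "t = alpha1 d * (a 1 + b 1) / ?P"
  proof -
    have "d $$ (0,0) * (d $$ (1,1) * (a 1 + b 1)) = d $$ (0,0) * (t * (d $$ (?n - 1, ?n - 1) * ?P))"
      using key by simp
    also have "\<dots> = t * (d $$ (0,0) * d $$ (?n - 1, ?n - 1)) * ?P" by (simp add: algebra_simps)
    also have "\<dots> = t * ?P" using D(1) by simp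
    finally have "d $$ (0,0) * (d $$ (1,1) * (a 1 + b 1)) = t * ?P" .
    then have tt: "t = d $$ (0,0) * d $$ (1,1) * (a 1 + b 1) / ?P" using Pnz by (simp add: field_simps)
    have nz: "d $$ (1,1) \<noteq> 0" using D(2) by auto
    have "1 / d $$ (1,1) = (d $$ (1,1) * d $$ (1,1)) / d $$ (1,1)" using D(2) by simp
    also have "\<dots> = d $$ (1,1)" using nz by simp
    finally have inv: "1 / d $$ (1,1) = d $$ (1,1)" .
    have al: "alpha1 d = d $$ (0,0) * d $$ (1,1)"
    proof -
      have "alpha1 d = d $$ (0,0) * (1 / d $$ (1,1))" unfolding alpha1_def ent_def by simp
      then show ?thesis unfolding inv .
    qed
    show ?thesis unfolding al tt ..
  qed
  have S1: "(\<Sum>i=1..m. ent u1 i (i+1)) = t"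
  proof -
    have "(\<Sum>i=1..m. ent u1 i (i+1)) = ent u1 1 (1+1) + (\<Sum>i=Suc 1..m. ent u1 i (i+1))"
      using m by (simp add: sum.atLeast_Suc_atMost)
    also have "(\<Sum>i=Suc 1..m. ent u1 i (i+1)) = 0"
    proof (rule sum.neutral, intro ballI)
      fix i assume i: "i \<in> {Suc 1..m}"
      have "u1 $$ (i - 1, i - 1 + 1) = 0" by (rule u1_wP[OF m assms(4)]) (use i in auto)
      then show "ent u1 i (i+1) = 0" using i by (simp add: ent_def)
    qed
    finally show ?thesis using t01 by (simp add: ent_def)
  qed
  have S2: "(\<Sum>i=1..m. ent u2 (i+1) i) = (\<Sum>i=1..<m. a i) + c + (\<Sum>i=1..<m. b i)"
  proof -
    have e: "ent u2 (i+1) i = (if i < m then a i + b i else c)" if "1 \<le> i" "i \<le> m" for i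
      using U2(1)[rule_format, of "i - 1"] that by (simp add: ent_def)
    have "(\<Sum>i=1..m. ent u2 (i+1) i) = (\<Sum>i=1..<Suc m. ent u2 (i+1) i)"
      by (simp add: atLeastLessThanSuc_atLeastAtMost)
    also have "\<dots> = (\<Sum>i=1..<m. ent u2 (i+1) i) + ent u2 (m+1) m" using m by simp
    also have "(\<Sum>i=1..<m. ent u2 (i+1) i) = (\<Sum>i=1..<m. a i + b i)"
      by (rule sum.cong) (use e in auto)
    also have "ent u2 (m+1) m = c" using e[of m] m by simp
    finally show ?thesis by (simp add: sum.distrib)
  qed
  show ?thesis unfolding superpot_def using S1 S2 tval by simp
qed

end
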